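(* Let $H(x,y)=\frac{y^2}{2}-\frac{x^2}{2}+\frac{x^4}{4}$. For $h>0$ let $\gamma(h)\subset\{H=h\}$ be the exterior oval of the real level set, oriented by the Hamiltonian vector field $\dot x=y,\ \dot y=x-x^3$. Define $I_0(h)=\oint_{\gamma(h)} y\,dx$ for $h>0$, and let $I_0$ also denote its analytic continuation to the complex domain $\mathcal D=\mathbb C\setminus(-\infty,0]$. Then neither $I_0(h)$ nor its derivative $I_0'(h)$ vanishes at any point $h\in\mathcal D$.
   Context: The integral $I_0(h)$, defined for real $h>0$, extends to a single-valued analytic function on $\mathcal D=\mathbb C\setminus(-\infty,0]$ (by continuous deformation of the cycle $\gamma(h)$ on the complex curve $\{(x,y)\in\mathbb C^2: H(x,y)=h\}$); the derivative $I_0'$ is that of this analytic continuation. *)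

theory Defs
  imports "HOL-Complex_Analysis.Complex_Analysis"
begin

definition Ham :: "real \<Rightarrow> real \<Rightarrow> real" where
  "Ham x y = y^2/2 - x^2/2 + x^4/4"

text \<open>For h > 0 the real level set {H = h} is a single closed oval (the exterior oval),
  given by y = +/- sqrt(2 (h - V x)) with V x = Ham x 0 = -x^2/2 + x^4/4, for x in the interval
  where h - V x \<ge> 0.  Oriented by x' = y, y' = x - x^3, the upper branch is traversed
  left to right and the lower branch right to left, so the line integral of y dx equals
  twice the integral of the upper branch.\<close>
definition oval_xrange :: "real \<Rightarrow> real set" where
  "oval_xrange h = {x::real. Ham x 0 \<le> h}"

definition I0 :: "real \<Rightarrow> real" where
  "I0 h = 2 * integral (oval_xrange h) (\<lambda>x. sqrt (2 * (h - Ham x 0)))"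

definition slitD :: "complex set" where
  "slitD = - complex_of_real ` {..0}"

end

theory Submission
  imports Defs
begin

lemma slitD_eq: "slitD = - \<real>\<^sub>\<le>\<^sub>0"
  unfolding slitD_def nonpos_Reals_def by auto

lemma open_slitD: "open slitD" by (simp add: slitD_eq closed_nonpos_Reals_complex open_Compl)
lemma conn_slitD: "connected slitD"
  unfolding slitD_def by (rule starlike_imp_connected[OF starlike_slotted_complex_plane_left])

lemma nonpos_iff: "z \<in> \<real>\<^sub>\<le>\<^sub>0 \<longleftrightarrow> Im z = 0 \<and> Re z \<le> 0"
  using complex_nonpos_Reals_iff by blast

definition Om :: "complex set" where "Om = - (complex_of_real ` {..1})"

lemma Om_iff: "s \<in> Om \<longleftrightarrow> Im s \<noteq> 0 \<or> Re s > 1"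
  unfolding Om_def
  by (auto simp: image_iff complex_eq_iff)

lemma open_Om: "open Om"
proof -
  have "Om = {s. Im s \<noteq> 0} \<union> {s. Re s > 1}" using Om_iff by auto
  moreover have "open {s. Im s \<noteq> 0}" by (intro open_Collect_neq continuous_intros)
  moreover have "open {s::complex. Re s > 1}" by (intro open_Collect_less continuous_intros)
  ultimately show ?thesis by (metis open_Un)
qed

definition vv :: "complex \<Rightarrow> real \<Rightarrow> complex" where
  "vv s t = (s + 1) * complex_of_real ((sin t)^2) + s - 1"

lemma Re_vv: "Re (vv s t) = (Re s + 1) * (sin t)^2 + Re s - 1" by (simp add: vv_def)
lemma Im_vv: "Im (vv s t) = Im s * (1 + (sin t)^2)" by (simp add: vv_def algebra_simps)

lemma vv_notin: assumes "s \<in> Om" shows "vv s t \<notin> \<real>\<^sub>\<le>\<^sub>0"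
proof
  assume "vv s t \<in> \<real>\<^sub>\<le>\<^sub>0"
  hence a: "Im (vv s t) = 0" "Re (vv s t) \<le> 0" using nonpos_iff by auto
  have p: "1 + (sin t)^2 > 0" by (simp add: add_pos_nonneg)
  from a(1) p have "Im s = 0" by (simp add: Im_vv)
  with assms have "Re s > 1" by (simp add: Om_iff)
  moreover have "(sin t)^2 \<ge> 0" by simp
  ultimately have "Re (vv s t) > 0" unfolding Re_vv
    by (smt (verit) mult_nonneg_nonneg)
  with a show False by simp
qed

definition Sq :: "complex \<Rightarrow> complex" where "Sq z = csqrt (1 + 4 * z)"

lemma Sq_prop: assumes "z \<in> slitD"
  shows "1 + 4 * z \<notin> \<real>\<^sub>\<le>\<^sub>0" "Sq z \<in> Om" "Sq z \<noteq> 0" "Re (Sq z) \<ge> 0"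
proof -
  have "z \<notin> \<real>\<^sub>\<le>\<^sub>0" using assms slitD_eq by auto
  hence z: "Im z \<noteq> 0 \<or> Re z > 0" unfolding nonpos_iff by auto
  thus w: "1 + 4 * z \<notin> \<real>\<^sub>\<le>\<^sub>0" unfolding nonpos_iff by auto
  show "Re (Sq z) \<ge> 0" unfolding Sq_def by (rule Re_csqrt)
  show "Sq z \<in> Om"
  proof (rule ccontr)
    assume "Sq z \<notin> Om"
    then have i: "Im (Sq z) = 0" and r: "Re (Sq z) \<le> 1" by (auto simp: Om_iff)
    have "(Sq z)^2 = 1 + 4 * z" unfolding Sq_def by simp
    hence "Im ((Sq z)^2) = 4 * Im z" "Re ((Sq z)^2) = 1 + 4 * Re z" by auto
    moreover have "Re (Sq z) \<ge> 0" unfolding Sq_def by (rule Re_csqrt)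
    ultimately show False using i r z
      by (simp add: power2_eq_square) (smt (verit) mult_le_one)
  qed
  thus "Sq z \<noteq> 0" by (auto simp: Om_iff)
qed

lemma cont_vv: "continuous_on (Om \<times> UNIV) (\<lambda>p. csqrt (vv (fst p) (snd p)))"
proof (rule continuous_on_compose2[OF continuous_on_csqrt])
  show "continuous_on (Om \<times> UNIV) (\<lambda>p. vv (fst p) (snd p))"
    unfolding vv_def by (intro continuous_intros)
  show "(\<lambda>p. vv (fst p) (snd p)) ` (Om \<times> UNIV) \<subseteq> - \<real>\<^sub>\<le>\<^sub>0"
    using vv_notin by auto
qed

lemma cont_vv_t: assumes "s \<in> Om" shows "continuous_on A (\<lambda>t. csqrt (vv s t))"
proof -
  have "continuous_on A (\<lambda>t. (s, t))" by (intro continuous_intros)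
  moreover have "(\<lambda>t. (s, t)) ` A \<subseteq> Om \<times> UNIV" using assms by auto
  ultimately show ?thesis using continuous_on_compose2[OF cont_vv, of A "\<lambda>t. (s,t)"] by auto
qed

lemma csqrt_vv_nz: "s \<in> Om \<Longrightarrow> csqrt (vv s t) \<noteq> 0"
  using vv_notin by (metis csqrt_eq_0 nonpos_Reals_zero_I)

definition G :: "complex \<Rightarrow> complex" where
  "G s = integral {-(pi/2)..pi/2} (\<lambda>t. complex_of_real ((cos t)^2) * csqrt (vv s t))"
definition G' :: "complex \<Rightarrow> complex" where
  "G' s = integral {-(pi/2)..pi/2} (\<lambda>t. complex_of_real ((cos t)^2 * (1 + (sin t)^2)) / (2 * csqrt (vv s t)))"
definition E :: "complex \<Rightarrow> complex" where
  "E s = integral {-(pi/2)..pi/2} (\<lambda>t. 1 / csqrt (vv s t))"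

lemma vv_deriv: "((\<lambda>s. vv s t) has_field_derivative complex_of_real (1 + (sin t)^2)) (at s within U)"
  unfolding vv_def by (auto intro!: derivative_eq_intros simp: algebra_simps)

lemma G_deriv: assumes "s0 \<in> Om" shows "(G has_field_derivative G' s0) (at s0)"
proof -
  obtain r where r: "r > 0" "ball s0 r \<subseteq> Om" using open_Om assms open_contains_ball by blast
  have "((\<lambda>s. integral (cbox (-(pi/2)) (pi/2)) (\<lambda>t. complex_of_real ((cos t)^2) * csqrt (vv s t)))
     has_field_derivative integral (cbox (-(pi/2)) (pi/2)) (\<lambda>t. complex_of_real ((cos t)^2 * (1 + (sin t)^2)) / (2 * csqrt (vv s0 t)))) (at s0 within ball s0 r)"
  proof (rule leibniz_rule_field_derivative[where fx = "\<lambda>s t. complex_of_real ((cos t)^2 * (1 + (sin t)^2)) / (2 * csqrt (vv s t))"])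
    fix x t assume x: "x \<in> ball s0 r" and "t \<in> cbox (-(pi/2)) (pi/2)"
    have xo: "x \<in> Om" using x r by auto
    show "((\<lambda>x. complex_of_real ((cos t)\<^sup>2) * csqrt (vv x t)) has_field_derivative
           complex_of_real ((cos t)\<^sup>2 * (1 + (sin t)\<^sup>2)) / (2 * csqrt (vv x t))) (at x within ball s0 r)"
      using vv_notin[OF xo] by (auto intro!: derivative_eq_intros vv_deriv)
  next
    fix x assume x: "x \<in> ball s0 r"
    have xo: "x \<in> Om" using x r by auto
    have "continuous_on (cbox (-(pi/2)) (pi/2)) (\<lambda>t. complex_of_real ((cos t)\<^sup>2) * csqrt (vv x t))"
      by (intro continuous_intros cont_vv_t xo)
    thus "(\<lambda>t. complex_of_real ((cos t)\<^sup>2) * csqrt (vv x t)) integrable_on cbox (- (pi / 2)) (pi / 2)"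
      by (rule integrable_continuous)
  next
    show "continuous_on (ball s0 r \<times> cbox (- (pi / 2)) (pi / 2))
     (\<lambda>(x, t). complex_of_real ((cos t)\<^sup>2 * (1 + (sin t)\<^sup>2)) / (2 * csqrt (vv x t)))"
      unfolding case_prod_beta
      by (intro continuous_intros continuous_on_subset[OF cont_vv]) (use r csqrt_vv_nz in auto)
  qed (use r in auto)
  then show ?thesis unfolding G_def G'_def cbox_interval
    using at_within_open[of s0 "ball s0 r"] r by auto
qed

lemma alg_id:
  fixes q s a b :: complex
  assumes q: "q \<noteq> 0" "q^2 = (s+1)*a^2+s-1" and ab: "a^2+b^2 = 1"
  shows "((s+1)*(2*a*b) * inverse (2*q) * (a*b) + (b^2-a^2)*q)/2 = b^2*q + (s+1)*(b^2*(1+a^2))/(2*q) - s/q"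
proof -
  have "q*(((s+1)*(2*a*b) * inverse (2*q) * (a*b) + (b^2-a^2)*q)/2) = q*(b^2*q + (s+1)*(b^2*(1+a^2))/(2*q) - s/q)"
  proof -
    have l: "q*(((s+1)*(2*a*b) * inverse (2*q) * (a*b) + (b^2-a^2)*q)/2) = ((s+1)*a^2*b^2 + (b^2-a^2)*q^2)/2"
      using q by (simp add: field_simps power2_eq_square)
    have r: "q*(b^2*q + (s+1)*(b^2*(1+a^2))/(2*q) - s/q) = b^2*q^2 + (s+1)*(b^2*(1+a^2))/2 - s"
      using q by (simp add: field_simps power2_eq_square)
    show ?thesis unfolding l r using q(2) ab by algebra
  qed
  thus ?thesis using q by simp
qed

definition phi :: "complex \<Rightarrow> real \<Rightarrow> complex" where
  "phi s t = complex_of_real (sin t * cos t) * csqrt (vv s t)"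

lemma phi_deriv: assumes s: "s \<in> Om"
  shows "(phi s has_vector_derivative
     ((s+1) * complex_of_real (2 * sin t * cos t) * inverse (2 * csqrt (vv s t)) * complex_of_real (sin t * cos t)
      + complex_of_real ((cos t)^2 - (sin t)^2) * csqrt (vv s t))) (at t within A)"
proof -
  have r: "((\<lambda>t. (sin t)^2) has_real_derivative 2 * sin t * cos t) (at t within A)"
    by (auto intro!: derivative_eq_intros)
  have "((\<lambda>t. complex_of_real ((sin t)^2)) has_vector_derivative complex_of_real (2 * sin t * cos t)) (at t within A)"
    by (rule has_vector_derivative_of_real[OF r])
  then have "((\<lambda>t. (s+1) * complex_of_real ((sin t)^2) + s - 1) has_vector_derivative ((s+1) * complex_of_real (2 * sin t * cos t) + 0) - 0) (at t within A)"
    by (intro has_vector_derivative_diff has_vector_derivative_add has_vector_derivative_mult_right has_vector_derivative_const)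
  then have dv: "((\<lambda>t. vv s t) has_vector_derivative (s+1) * complex_of_real (2 * sin t * cos t)) (at t within A)"
    unfolding vv_def by simp
  have dc: "(csqrt has_field_derivative inverse (2 * csqrt (vv s t))) (at (vv s t) within (\<lambda>t. vv s t) ` A)"
    using has_field_derivative_csqrt[OF vv_notin[OF s]] has_field_derivative_at_within by blast
  have d2: "((\<lambda>t. csqrt (vv s t)) has_vector_derivative (s+1) * complex_of_real (2 * sin t * cos t) * inverse (2 * csqrt (vv s t))) (at t within A)"
    using field_vector_diff_chain_within[OF dv dc] by (simp add: o_def)
  have d1: "((\<lambda>t. complex_of_real (sin t * cos t)) has_vector_derivative complex_of_real ((cos t)^2 - (sin t)^2)) (at t within A)"
    by (auto intro!: derivative_eq_intros simp: power2_eq_square)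
  show ?thesis unfolding phi_def
    using has_vector_derivative_mult[OF d1 d2] by (simp add: algebra_simps)
qed

lemma G_identity: assumes s: "s \<in> Om" shows "G s + (s+1) * G' s = s * E s"
proof -
  let ?I = "{-(pi/2)..pi/2}"
  let ?g1 = "\<lambda>t. complex_of_real ((cos t)^2) * csqrt (vv s t)"
  let ?g2 = "\<lambda>t. complex_of_real ((cos t)^2 * (1 + (sin t)^2)) / (2 * csqrt (vv s t))"
  let ?e = "\<lambda>t. 1 / csqrt (vv s t)"
  let ?d = "\<lambda>t. (s+1) * complex_of_real (2 * sin t * cos t) * inverse (2 * csqrt (vv s t)) * complex_of_real (sin t * cos t)
      + complex_of_real ((cos t)^2 - (sin t)^2) * csqrt (vv s t)"
  have c: "continuous_on ?I (\<lambda>t. csqrt (vv s t))" by (rule cont_vv_t[OF s])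
  have nz: "\<And>t. csqrt (vv s t) \<noteq> 0" using csqrt_vv_nz[OF s] .
  have i1: "(?g1 has_integral G s) ?I" unfolding G_def
    by (intro integrable_integral integrable_continuous_interval continuous_intros c)
  have i2: "(?g2 has_integral G' s) ?I" unfolding G'_def
    by (intro integrable_integral integrable_continuous_interval continuous_intros c) (use nz in auto)
  have i3: "(?e has_integral E s) ?I" unfolding E_def
    by (intro integrable_integral integrable_continuous_interval continuous_intros c) (use nz in auto)
  have isum: "((\<lambda>t. ?g1 t + (s+1) * ?g2 t - s * ?e t) has_integral (G s + (s+1) * G' s - s * E s)) ?I"
    by (intro has_integral_diff has_integral_add has_integral_mult_right i1 i2 i3)
  have ftc: "(?d has_integral (phi s (pi/2) - phi s (-(pi/2)))) ?I"
  proof (rule fundamental_theorem_of_calculus)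
    fix x assume "x \<in> ?I"
    show "(phi s has_vector_derivative ?d x) (at x within ?I)" by (rule phi_deriv[OF s])
  qed simp
  have p0: "phi s (pi/2) - phi s (-(pi/2)) = 0" by (simp add: phi_def)
  have ftc2: "((\<lambda>t. ?d t / 2) has_integral (phi s (pi/2) - phi s (-(pi/2))) / 2) ?I"
    by (rule has_integral_divide[OF ftc])
  have pw: "?d t / 2 = ?g1 t + (s+1) * ?g2 t - s * ?e t" for t
  proof -
    have "((s+1)*(2*complex_of_real (sin t)*complex_of_real (cos t)) * inverse (2*csqrt (vv s t)) * (complex_of_real (sin t)*complex_of_real (cos t)) + ((complex_of_real (cos t))^2-(complex_of_real (sin t))^2)*csqrt (vv s t))/2
       = (complex_of_real (cos t))^2*csqrt (vv s t) + (s+1)*((complex_of_real (cos t))^2*(1+(complex_of_real (sin t))^2))/(2*csqrt (vv s t)) - s/csqrt (vv s t)"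
    proof (rule alg_id)
      show "csqrt (vv s t) \<noteq> 0" by (rule nz)
      show "(csqrt (vv s t))^2 = (s+1)*(complex_of_real (sin t))^2+s-1" by (simp add: vv_def)
      have "(sin t)^2 + (cos t)^2 = 1" by simp
      then show "(complex_of_real (sin t))^2+(complex_of_real (cos t))^2 = 1"
        by (metis of_real_add of_real_1 of_real_power)
    qed
    thus ?thesis by (simp add: algebra_simps)
  qed
  have "((\<lambda>t. ?g1 t + (s+1) * ?g2 t - s * ?e t) has_integral 0) ?I"
    using ftc2 unfolding p0 pw by simp
  with isum have "G s + (s+1) * G' s - s * E s = 0" using has_integral_unique by blast
  thus ?thesis by (simp add: algebra_simps)
qed

lemma oval_eq: assumes h: "h > 0"
  shows "oval_xrange h = {- sqrt (sqrt (1+4*h) + 1) .. sqrt (sqrt (1+4*h) + 1)}"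
proof -
  define \<sigma> where "\<sigma> = sqrt (1+4*h)"
  have s1: "\<sigma> > 1" unfolding \<sigma>_def using h by simp
  have s2: "\<sigma>^2 = 1+4*h" unfolding \<sigma>_def using h by simp
  have "Ham x 0 \<le> h \<longleftrightarrow> \<bar>x\<bar> \<le> sqrt (\<sigma>+1)" for x
  proof -
    have "Ham x 0 \<le> h \<longleftrightarrow> (x^2 - 1)^2 \<le> \<sigma>^2" unfolding s2 Ham_def
      by (simp add: power2_eq_square power4_eq_xxxx algebra_simps)
    also have "\<dots> \<longleftrightarrow> \<bar>x^2 - 1\<bar> \<le> \<sigma>" using s1 abs_le_square_iff[of "x^2-1" \<sigma>] by simp
    also have "\<dots> \<longleftrightarrow> x^2 \<le> \<sigma> + 1" using s1 by (smt (verit) zero_le_power2)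
    also have "\<dots> \<longleftrightarrow> \<bar>x\<bar> \<le> sqrt (\<sigma>+1)" using s1 by (simp add: real_le_rsqrt sqrt_le_D real_sqrt_abs[symmetric] del: real_sqrt_abs)
    finally show ?thesis .
  qed
  hence "x \<in> oval_xrange h \<longleftrightarrow> x \<in> {- sqrt (\<sigma>+1) .. sqrt (\<sigma>+1)}" for x
    unfolding oval_xrange_def by (simp add: abs_le_iff) linarith
  thus ?thesis unfolding \<sigma>_def by blast
qed

lemma pw_real:
  fixes A \<sigma> h t :: real
  assumes A: "A^2 = \<sigma> + 1" "A \<ge> 0" and s: "\<sigma>^2 = 1 + 4*h" "\<sigma> > 1" and c: "cos t \<ge> 0"
  shows "(A * cos t) * sqrt (2 * (h - Ham (A * sin t) 0)) = (\<sigma>+1) * ((cos t)^2 * sqrt ((\<sigma>+1)*(sin t)^2 + \<sigma> - 1)) / sqrt 2"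
proof -
  let ?w = "(\<sigma>+1)*(sin t)^2 + \<sigma> - 1"
  have sc: "(sin t)^2 + (cos t)^2 = 1" by simp
  have w0: "?w \<ge> 0" using s by (smt (verit) zero_le_power2 mult_nonneg_nonneg)
  have "2 * (h - Ham (A * sin t) 0) = (A * cos t)^2 * ?w / 2"
  proof -
    have "2 * (h - Ham (A * sin t) 0) = 2*h + A^2*(sin t)^2 - (A^2)^2*((sin t)^2)^2/2"
      unfolding Ham_def by (simp add: power_mult_distrib algebra_simps power2_eq_square power4_eq_xxxx)
    also have "\<dots> = (A * cos t)^2 * ?w / 2"
      unfolding power_mult_distrib A(1)
    proof -
      have hh: "h = (\<sigma>^2 - 1)/4" using s by simp
      have cc: "(cos t)^2 = 1 - (sin t)^2" by (simp add: cos_squared_eq)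
      show "2 * h + (\<sigma> + 1) * (sin t)\<^sup>2 - (\<sigma> + 1)\<^sup>2 * ((sin t)\<^sup>2)\<^sup>2 / 2 = (\<sigma> + 1) * (cos t)\<^sup>2 * ?w / 2"
        unfolding hh cc by (simp add: field_simps power2_eq_square)
    qed
    finally show ?thesis .
  qed
  also have "(A * cos t)^2 * ?w / 2 = ((A * cos t) * sqrt ?w / sqrt 2)^2"
    using w0 by (simp add: power_divide power_mult_distrib)
  finally have e: "2 * (h - Ham (A * sin t) 0) = ((A * cos t) * sqrt ?w / sqrt 2)^2" .
  have nn: "(A * cos t) * sqrt ?w / sqrt 2 \<ge> 0" by (intro divide_nonneg_pos mult_nonneg_nonneg) (use A c w0 in auto)
  have "sqrt (2 * (h - Ham (A * sin t) 0)) = (A * cos t) * sqrt ?w / sqrt 2"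
    using nn unfolding e real_sqrt_abs by (rule abs_of_nonneg)
  hence "(A * cos t) * sqrt (2 * (h - Ham (A * sin t) 0)) = (A * cos t)^2 * sqrt ?w / sqrt 2"
    by (simp add: power2_eq_square)
  thus ?thesis unfolding power_mult_distrib A(1) by simp
qed

lemma I0_formula: assumes h: "h > 0"
  shows "I0 h = sqrt 2 * (sqrt (1+4*h) + 1) * integral {-(pi/2)..pi/2} (\<lambda>t. (cos t)^2 * sqrt ((sqrt (1+4*h)+1)*(sin t)^2 + sqrt (1+4*h) - 1))"
proof -
  define \<sigma> where "\<sigma> = sqrt (1+4*h)"
  define A where "A = sqrt (\<sigma> + 1)"
  have s1: "\<sigma> > 1" unfolding \<sigma>_def using h by simp
  have s2: "\<sigma>^2 = 1+4*h" unfolding \<sigma>_def using h by simp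
  have A1: "A^2 = \<sigma> + 1" "A \<ge> 0" unfolding A_def using s1 by auto
  let ?f = "\<lambda>x. sqrt (2 * (h - Ham x 0))"
  let ?g = "\<lambda>t. A * sin t"
  have sub: "((\<lambda>t. (A * cos t) *\<^sub>R ?f (?g t)) has_integral integral {?g (-(pi/2))..?g (pi/2)} ?f) {-(pi/2)..pi/2}"
  proof (rule has_integral_substitution[where c = "-A" and d = A])
    show "?g (- (pi / 2)) \<le> ?g (pi / 2)" using A1 by simp
    show "?g ` {- (pi / 2)..pi / 2} \<subseteq> {- A..A}"
    proof
      fix y assume "y \<in> ?g ` {- (pi / 2)..pi / 2}"
      then obtain t where "y = A * sin t" by auto
      moreover have "\<bar>sin t\<bar> \<le> 1" by simp
      moreover have "\<bar>A * sin t\<bar> \<le> A" using A1 \<open>\<bar>sin t\<bar> \<le> 1\<close> by (simp add: abs_mult mult_left_le)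
      ultimately show "y \<in> {-A..A}" by (simp add: abs_le_iff)
    qed
    show "continuous_on {- A..A} ?f" unfolding Ham_def by (intro continuous_intros) auto
    fix t show "(?g has_real_derivative A * cos t) (at t within {- (pi / 2)..pi / 2})"
      by (auto intro!: derivative_eq_intros)
  qed simp
  have gends: "?g (-(pi/2)) = -A" "?g (pi/2) = A" by auto
  have ox: "oval_xrange h = {-A..A}" unfolding A_def \<sigma>_def by (rule oval_eq[OF h])
  let ?k = "\<lambda>t. (\<sigma>+1) * ((cos t)^2 * sqrt ((\<sigma>+1)*(sin t)^2 + \<sigma> - 1)) / sqrt 2"
  have "(?k has_integral integral {-A..A} ?f) {-(pi/2)..pi/2}"
  proof (rule has_integral_eq[OF _ sub[unfolded gends]])
    fix t assume "t \<in> {-(pi/2)..pi/2}"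
    hence "cos t \<ge> 0" by (auto intro: cos_ge_zero)
    thus "(A * cos t) *\<^sub>R ?f (?g t) = ?k t" using pw_real[OF A1 s2 s1] by simp
  qed
  moreover have "(?k has_integral (\<sigma>+1) * integral {-(pi/2)..pi/2} (\<lambda>t. (cos t)^2 * sqrt ((\<sigma>+1)*(sin t)^2 + \<sigma> - 1)) / sqrt 2) {-(pi/2)..pi/2}"
    by (intro has_integral_divide has_integral_mult_right integrable_integral integrable_continuous_interval continuous_intros)
  ultimately have "integral {-A..A} ?f = (\<sigma>+1) * integral {-(pi/2)..pi/2} (\<lambda>t. (cos t)^2 * sqrt ((\<sigma>+1)*(sin t)^2 + \<sigma> - 1)) / sqrt 2"
    using has_integral_unique by blast
  hence "I0 h = 2 * ((\<sigma>+1) * integral {-(pi/2)..pi/2} (\<lambda>t. (cos t)^2 * sqrt ((\<sigma>+1)*(sin t)^2 + \<sigma> - 1)) / sqrt 2)"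
    unfolding I0_def ox by simp
  also have "\<dots> = sqrt 2 * (\<sigma>+1) * integral {-(pi/2)..pi/2} (\<lambda>t. (cos t)^2 * sqrt ((\<sigma>+1)*(sin t)^2 + \<sigma> - 1))"
  proof -
    have "2 / sqrt 2 = sqrt 2" by (simp add: real_div_sqrt)
    thus ?thesis by (metis (no_types, lifting) mult.assoc times_divide_eq_right times_divide_eq_left)
  qed
  finally show ?thesis unfolding \<sigma>_def .
qed


lemma Re_csqrt_pos: assumes "v \<notin> \<real>\<^sub>\<le>\<^sub>0" shows "Re (csqrt v) > 0"
proof (rule ccontr)
  assume "\<not> Re (csqrt v) > 0"
  hence r0: "Re (csqrt v) = 0" using Re_csqrt[of v] by simp
  have "v = (csqrt v)^2" by simp
  also have "\<dots> = complex_of_real (- ((Im (csqrt v))^2))" using r0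
    by (simp add: complex_eq_iff power2_eq_square)
  finally have "v \<in> \<real>\<^sub>\<le>\<^sub>0" by (metis nonpos_Reals_of_real_iff neg_le_0_iff_le zero_le_power2)
  with assms show False by simp
qed

lemma Re_inv_pos: fixes w :: complex assumes "Re w > 0" shows "Re (1 / w) > 0"
proof -
  have "(Re w)^2 + (Im w)^2 > 0" using assms by (simp add: add_pos_nonneg)
  thus ?thesis using assms by (simp add: Re_divide power2_eq_square)
qed

lemma Re_E_pos: assumes s: "s \<in> Om" shows "Re (E s) > 0"
proof -
  let ?f = "\<lambda>t. 1 / csqrt (vv s t)"
  have c: "continuous_on {-(pi/2)..pi/2} ?f"
    by (intro continuous_intros cont_vv_t[OF s]) (use csqrt_vv_nz[OF s] in auto)
  have "(?f has_integral E s) {-(pi/2)..pi/2}" unfolding E_def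
    by (intro integrable_integral integrable_continuous_interval c)
  hence "((\<lambda>t. Re (?f t)) has_integral Re (E s)) {-(pi/2)..pi/2}" by (rule has_integral_Re)
  hence eq: "Re (E s) = integral {-(pi/2)..pi/2} (\<lambda>t. Re (?f t))" by (simp add: integral_unique)
  have zin: "(0::real) \<in> {-(pi/2)<..<pi/2}" using pi_gt_zero by simp
  have "integral {-(pi/2)..pi/2} (\<lambda>t. 0::real) < integral {-(pi/2)..pi/2} (\<lambda>t. Re (?f t))"
  proof (rule integral_less_real)
    show "continuous_on {- (pi / 2)..pi / 2} (\<lambda>t. Re (?f t))" by (intro continuous_intros c)
    fix t show "0 < Re (?f t)" by (intro Re_inv_pos Re_csqrt_pos vv_notin s)
  qed (auto intro: continuous_intros, insert pi_gt_zero, linarith)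
  thus ?thesis unfolding eq by simp
qed

lemma Re_G_pos: assumes s: "s \<in> Om" shows "Re (G s) > 0"
proof -
  let ?f = "\<lambda>t. complex_of_real ((cos t)^2) * csqrt (vv s t)"
  have c: "continuous_on {-(pi/2)..pi/2} ?f"
    by (intro continuous_intros cont_vv_t[OF s])
  have "(?f has_integral G s) {-(pi/2)..pi/2}" unfolding G_def
    by (intro integrable_integral integrable_continuous_interval c)
  hence "((\<lambda>t. Re (?f t)) has_integral Re (G s)) {-(pi/2)..pi/2}" by (rule has_integral_Re)
  hence eq: "Re (G s) = integral {-(pi/2)..pi/2} (\<lambda>t. Re (?f t))" by (simp add: integral_unique)
  have zin: "(0::real) \<in> {-(pi/2)<..<pi/2}" using pi_gt_zero by simp
  have "integral {-(pi/2)..pi/2} (\<lambda>t. 0::real) < integral {-(pi/2)..pi/2} (\<lambda>t. Re (?f t))"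
  proof (rule integral_less_real)
    show "continuous_on {- (pi / 2)..pi / 2} (\<lambda>t. Re (?f t))" by (intro continuous_intros c)
    fix t assume "t \<in> {- (pi / 2)<..<pi / 2}"
    hence "cos t > 0" by (auto intro: cos_gt_zero_pi)
    moreover have "Re (csqrt (vv s t)) > 0" by (intro Re_csqrt_pos vv_notin s)
    ultimately show "0 < Re (?f t)" by simp
  qed (auto intro: continuous_intros, insert pi_gt_zero, linarith)
  thus ?thesis unfolding eq by simp
qed

definition FF :: "complex \<Rightarrow> complex" where
  "FF z = complex_of_real (sqrt 2) * ((Sq z + 1) * G (Sq z))"

lemma FF_deriv: assumes z: "z \<in> slitD"
  shows "(FF has_field_derivative complex_of_real (sqrt 2) * (2 * E (Sq z))) (at z)"
proof -
  note sp = Sq_prop[OF z]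
  have dSq: "(Sq has_field_derivative 2 / Sq z) (at z)"
  proof -
    have "((\<lambda>z. 1 + 4 * z) has_field_derivative 4) (at z)" by (auto intro!: derivative_eq_intros)
    from has_field_derivative_csqrt'[OF this sp(1)]
    show ?thesis unfolding Sq_def[abs_def] by (simp add: Sq_def)
  qed
  have dG: "((\<lambda>z. G (Sq z)) has_field_derivative G' (Sq z) * (2 / Sq z)) (at z)"
    by (rule DERIV_chain2[OF G_deriv[OF sp(2)] dSq])
  have "((\<lambda>z. Sq z + 1) has_field_derivative 2 / Sq z + 0) (at z)"
    by (intro DERIV_add dSq DERIV_const)
  from DERIV_mult'[OF this dG]
  have "((\<lambda>z. (Sq z + 1) * G (Sq z)) has_field_derivative (Sq z + 1) * (G' (Sq z) * (2 / Sq z)) + (2 / Sq z + 0) * G (Sq z)) (at z)" .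
  from DERIV_cmult[OF this, of "complex_of_real (sqrt 2)"]
  have "(FF has_field_derivative complex_of_real (sqrt 2) * ((2 / Sq z + 0) * G (Sq z) + (Sq z + 1) * (G' (Sq z) * (2 / Sq z)))) (at z)"
    unfolding FF_def[abs_def] by (simp add: add.commute)
  moreover have "(2 / Sq z + 0) * G (Sq z) + (Sq z + 1) * (G' (Sq z) * (2 / Sq z)) = 2 * E (Sq z)"
  proof -
    have "(2 / Sq z + 0) * G (Sq z) + (Sq z + 1) * (G' (Sq z) * (2 / Sq z)) = (2 / Sq z) * (G (Sq z) + (Sq z + 1) * G' (Sq z))"
      using sp(3) by (simp add: field_simps)
    also have "\<dots> = (2 / Sq z) * (Sq z * E (Sq z))" by (simp add: G_identity[OF sp(2)])
    also have "\<dots> = 2 * E (Sq z)" using sp(3) by simp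
    finally show ?thesis .
  qed
  ultimately show ?thesis by simp
qed

lemma FF_nz: assumes z: "z \<in> slitD" shows "FF z \<noteq> 0"
proof -
  note sp = Sq_prop[OF z]
  have "Sq z + 1 \<noteq> 0" using sp(4) by (auto simp: complex_eq_iff)
  moreover have "G (Sq z) \<noteq> 0" using Re_G_pos[OF sp(2)] by auto
  ultimately show ?thesis unfolding FF_def by simp
qed

lemma FF_real: assumes h: "h > 0" shows "FF (complex_of_real h) = complex_of_real (I0 h)"
proof -
  define \<sigma> where "\<sigma> = sqrt (1+4*h)"
  have s1: "\<sigma> > 1" unfolding \<sigma>_def using h by simp
  have sq: "Sq (complex_of_real h) = complex_of_real \<sigma>"
    unfolding Sq_def \<sigma>_def using h by simp
  have vr: "csqrt (vv (complex_of_real \<sigma>) t) = complex_of_real (sqrt ((\<sigma>+1)*(sin t)^2 + \<sigma> - 1))" for t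
  proof -
    have "vv (complex_of_real \<sigma>) t = complex_of_real ((\<sigma>+1)*(sin t)^2 + \<sigma> - 1)" unfolding vv_def by simp
    moreover have "(\<sigma>+1)*(sin t)^2 + \<sigma> - 1 \<ge> 0" using s1 by (smt (verit) zero_le_power2 mult_nonneg_nonneg)
    ultimately show ?thesis by simp
  qed
  have "G (complex_of_real \<sigma>) = complex_of_real (integral {-(pi/2)..pi/2} (\<lambda>t. (cos t)^2 * sqrt ((\<sigma>+1)*(sin t)^2 + \<sigma> - 1)))"
  proof -
    have "((\<lambda>t. (cos t)^2 * sqrt ((\<sigma>+1)*(sin t)^2 + \<sigma> - 1)) has_integral integral {-(pi/2)..pi/2} (\<lambda>t. (cos t)^2 * sqrt ((\<sigma>+1)*(sin t)^2 + \<sigma> - 1))) {-(pi/2)..pi/2}"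
      by (intro integrable_integral integrable_continuous_interval continuous_intros)
    from has_integral_of_real[OF this]
    have "((\<lambda>t. complex_of_real ((cos t)^2) * csqrt (vv (complex_of_real \<sigma>) t)) has_integral complex_of_real (integral {-(pi/2)..pi/2} (\<lambda>t. (cos t)^2 * sqrt ((\<sigma>+1)*(sin t)^2 + \<sigma> - 1)))) {-(pi/2)..pi/2}"
      unfolding vr of_real_mult by simp
    thus ?thesis unfolding G_def by (rule integral_unique)
  qed
  thus ?thesis unfolding FF_def sq I0_formula[OF h] \<sigma>_def[symmetric] by simp
qed

lemma FF_hol: "FF holomorphic_on slitD"
  using FF_deriv open_slitD by (auto simp: holomorphic_on_open)

theorem lemma3:
  shows "(\<exists>f. f holomorphic_on slitD \<and> (\<forall>h::real. h > 0 \<longrightarrow> f (complex_of_real h) = complex_of_real (I0 h)))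
    \<and> (\<forall>f. f holomorphic_on slitD \<and> (\<forall>h::real. h > 0 \<longrightarrow> f (complex_of_real h) = complex_of_real (I0 h))
          \<longrightarrow> (\<forall>z\<in>slitD. f z \<noteq> 0 \<and> deriv f z \<noteq> 0))"
proof (intro conjI allI impI ballI)
  show "\<exists>f. f holomorphic_on slitD \<and> (\<forall>h::real. h > 0 \<longrightarrow> f (complex_of_real h) = complex_of_real (I0 h))"
    using FF_hol FF_real by blast
next
  fix f z
  assume a: "f holomorphic_on slitD \<and> (\<forall>h::real. h > 0 \<longrightarrow> f (complex_of_real h) = complex_of_real (I0 h))"
    and z: "z \<in> slitD"
  have eq: "f w = FF w" if w: "w \<in> slitD" for w
  proof -
    let ?U = "complex_of_real ` {0<..}"
    have "(\<lambda>w. f w - FF w) w = 0"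
    proof (rule analytic_continuation[where f = "\<lambda>w. f w - FF w" and S = slitD and U = ?U and \<xi> = 1 and w = w])
      show "(\<lambda>w. f w - FF w) holomorphic_on slitD" using a FF_hol by (intro holomorphic_on_diff) auto
      show "open slitD" by (rule open_slitD)
      show "connected slitD" by (rule conn_slitD)
      show "?U \<subseteq> slitD" unfolding slitD_def by auto
      show "1 \<in> slitD" unfolding slitD_def by (auto simp: image_iff complex_eq_iff)
      show "1 islimpt ?U"
      proof (rule islimpt_approachable[THEN iffD2], intro allI impI)
        fix e :: real assume e: "e > 0"
        show "\<exists>x'\<in>?U. x' \<noteq> 1 \<and> dist x' 1 < e"
        proof (intro bexI conjI)
          show "complex_of_real (1 + e/2) \<in> ?U" using e by (intro imageI) simp
          show "complex_of_real (1 + e/2) \<noteq> 1" using e by (simp add: complex_eq_iff)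
          have "dist (complex_of_real (1 + e/2)) 1 = dist (1 + e/2) (1::real)"
            by (metis dist_of_real of_real_1)
          thus "dist (complex_of_real (1 + e/2)) 1 < e" using e by (simp add: dist_real_def)
        qed
      qed
      fix u assume "u \<in> ?U"
      then obtain h where "h > 0" "u = complex_of_real h" by auto
      thus "f u - FF u = 0" using a FF_real by simp
    qed (rule w)
    thus ?thesis by simp
  qed
  show "f z \<noteq> 0" using eq[OF z] FF_nz[OF z] by simp
  have "(f has_field_derivative complex_of_real (sqrt 2) * (2 * E (Sq z))) (at z)"
    by (rule has_field_derivative_transform_within_open[OF FF_deriv[OF z] open_slitD z]) (simp add: eq)
  hence "deriv f z = complex_of_real (sqrt 2) * (2 * E (Sq z))" by (rule DERIV_imp_deriv)
  moreover have "E (Sq z) \<noteq> 0" using Re_E_pos[OF Sq_prop(2)[OF z]] by auto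
  ultimately show "deriv f z \<noteq> 0" by simp
qed

end
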